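(* Let $X$ be a topological space and $p \in X$. If $X$ is productively countably tight at $p$, then $\mathsf{S}_1(\Omega_p, \Omega_p)$ holds, i.e., $X$ has countable strong fan tightness at $p$: for every sequence $(A_n)_{n \in \omega}$ of elements of $\Omega_p$ one can select $a_n \in A_n$ such that $\{a_n : n \in \omega\} \in \Omega_p$.
   Context: For a point $p$ of a space $X$, $\Omega_p$ denotes the collection of all sets $A \subset X$ such that $p \notin A$ and $p \in \overline{A}$. A space $Y$ has countable tightness at $y \in Y$ if whenever $y \in \overline{A}$ there is a countable $B \subset A$ with $y \in \overline{B}$. $X$ is productively countably tight at $p$ if for every space $Y$ and every $y \in Y$ such that $Y$ has countable tightness at $y$, the product $X \times Y$ has countable tightness at $\langle p, y\rangle$. *)

theory Defs
  imports "HOL-Analysis.Analysis"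
begin

definition Omega_at :: "'a topology \<Rightarrow> 'a \<Rightarrow> 'a set set" where
  "Omega_at X p = {A. A \<subseteq> topspace X \<and> p \<notin> A \<and> p \<in> X closure_of A}"

definition countably_tight_at :: "'b topology \<Rightarrow> 'b \<Rightarrow> bool" where
  "countably_tight_at Y y \<longleftrightarrow>
     (\<forall>A. A \<subseteq> topspace Y \<and> y \<in> Y closure_of A \<longrightarrow>
        (\<exists>B. B \<subseteq> A \<and> countable B \<and> y \<in> Y closure_of B))"

text \<open>Productive countable tightness at p, with the test spaces Y ranging over
  topologies on the type given by the first argument.\<close>
definition productively_countably_tight_at :: "'b itself \<Rightarrow> 'a topology \<Rightarrow> 'a \<Rightarrow> bool" where
  "productively_countably_tight_at TYPE('b) X p \<longleftrightarrow>
     (\<forall>(Y::'b topology) y. y \<in> topspace Y \<and> countably_tight_at Y y \<longrightarrow>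
        countably_tight_at (prod_topology X Y) (p, y))"

definition S1_Omega_at :: "'a topology \<Rightarrow> 'a \<Rightarrow> bool" where
  "S1_Omega_at X p \<longleftrightarrow>
     (\<forall>A :: nat \<Rightarrow> 'a set. (\<forall>n. A n \<in> Omega_at X p) \<longrightarrow>
        (\<exists>a. (\<forall>n. a n \<in> A n) \<and> range a \<in> Omega_at X p))"

end

theory Submission
  imports Defs
begin

definition enc :: "'a \<Rightarrow> (nat \<Rightarrow> bool) \<Rightarrow> nat \<Rightarrow> ('a \<times> nat) set" where
  "enc p c k = Pair p ` insert (2*k+1) ((\<lambda>i. 2*i) ` {i. c i})"

definition fanP :: "'a \<Rightarrow> ('a \<times> nat) set set \<Rightarrow> bool" where
  "fanP p S \<longleftrightarrow> ({} \<in> S \<longrightarrow> (\<forall>c. finite {k. enc p c k \<notin> S}))"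

definition fan :: "'a \<Rightarrow> ('a \<times> nat) set topology" where
  "fan p = topology (fanP p)"

lemma enc_ne: "enc p c k \<noteq> {}"
  by (simp add: enc_def)

lemma enc_dec: "(\<lambda>i. (p, 2*i) \<in> enc p c k) = c"
proof
  fix i show "((p, 2*i) \<in> enc p c k) = c i"
  proof
    assume "(p, 2*i) \<in> enc p c k"
    then have "2*i = 2*k+1 \<or> (\<exists>j. c j \<and> 2*i = 2*j)" by (auto simp: enc_def)
    moreover have "2*i \<noteq> 2*k+1" by presburger
    ultimately show "c i" by auto
  qed (auto simp: enc_def)
qed

lemma enc_inj: "enc p c k = enc p c' k' \<Longrightarrow> c = c' \<and> k = k'"
proof -
  assume h: "enc p c k = enc p c' k'"
  have cc: "c = c'" by (metis enc_dec h)
  have "(p, 2*k+1) \<in> enc p c k" by (simp add: enc_def)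
  then have "(p, 2*k+1) \<in> enc p c' k'" using h by simp
  then have "2*k+1 = 2*k'+1 \<or> (\<exists>j. 2*k+1 = 2*j)" unfolding enc_def by blast
  then have "k = k'" by presburger
  with cc show ?thesis by simp
qed

lemma istop_fan: "istopology (fanP p)"
  unfolding istopology_def fanP_def
proof (intro conjI allI impI)
  fix S T :: "('a \<times> nat) set set"
  assume S: "{} \<in> S \<longrightarrow> (\<forall>c. finite {k. enc p c k \<notin> S})"
    and T: "{} \<in> T \<longrightarrow> (\<forall>c. finite {k. enc p c k \<notin> T})"
    and e: "{} \<in> S \<inter> T"
  fix c
  have "{k. enc p c k \<notin> S \<inter> T} = {k. enc p c k \<notin> S} \<union> {k. enc p c k \<notin> T}" by auto
  then show "finite {k. enc p c k \<notin> S \<inter> T}" using S T e by auto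
next
  fix K :: "('a \<times> nat) set set set" and c
  assume K: "\<forall>S\<in>K. {} \<in> S \<longrightarrow> (\<forall>c. finite {k. enc p c k \<notin> S})" and e: "{} \<in> \<Union>K"
  then obtain S where "S \<in> K" "{} \<in> S" by auto
  then have "finite {k. enc p c k \<notin> S}" using K by auto
  then show "finite {k. enc p c k \<notin> \<Union>K}"
    by (rule finite_subset[rotated]) (use \<open>S \<in> K\<close> in auto)
qed

lemma openin_fan: "openin (fan p) S \<longleftrightarrow> fanP p S"
  by (simp add: fan_def istop_fan)

lemma topspace_fan[simp]: "topspace (fan p) = UNIV"
proof -
  have "openin (fan p) UNIV" by (simp add: openin_fan fanP_def)
  then show ?thesis using openin_subset by blast
qed

lemma ct_fan: "countably_tight_at (fan p) {}"
  unfolding countably_tight_at_def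
proof (intro allI impI)
  fix A :: "('a \<times> nat) set set"
  assume "A \<subseteq> topspace (fan p) \<and> {} \<in> fan p closure_of A"
  then have cl: "\<forall>T. {} \<in> T \<and> openin (fan p) T \<longrightarrow> (\<exists>y. y \<in> A \<and> y \<in> T)"
    unfolding in_closure_of by simp
  show "\<exists>B\<subseteq>A. countable B \<and> {} \<in> fan p closure_of B"
  proof (cases "{} \<in> A")
    case True
    have "{} \<in> fan p closure_of {{}}" by (rule closure_of_subset[THEN subsetD]) auto
    with True show ?thesis by blast
  next
    case False
    have "\<exists>c. infinite {k. enc p c k \<in> A}"
    proof (rule ccontr)
      assume "\<nexists>c. infinite {k. enc p c k \<in> A}"
      then have fin: "\<And>c. finite {k. enc p c k \<in> A}" by blast
      have "\<And>c. {k. enc p c k \<notin> UNIV - A} = {k. enc p c k \<in> A}" by blast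
      then have "fanP p (UNIV - A)" unfolding fanP_def using fin by simp
      then have "openin (fan p) (UNIV - A)" by (simp add: openin_fan)
      moreover have "{} \<in> UNIV - A" using False by simp
      ultimately obtain y where "y \<in> A" "y \<in> UNIV - A" using cl by blast
      then show False by simp
    qed
    then obtain c where inf: "infinite {k. enc p c k \<in> A}" by blast
    have "{} \<in> fan p closure_of (A \<inter> range (enc p c))"
      unfolding in_closure_of
    proof (intro conjI allI impI)
      fix T assume T: "{} \<in> T \<and> openin (fan p) T"
      then have "fanP p T" by (simp add: openin_fan)
      then have "finite {k. enc p c k \<notin> T}" using T unfolding fanP_def by blast
      then have "infinite ({k. enc p c k \<in> A} - {k. enc p c k \<notin> T})"
        using inf by (rule Diff_infinite_finite)
      then have "({k. enc p c k \<in> A} - {k. enc p c k \<notin> T}) \<noteq> {}"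
        by (rule infinite_imp_nonempty)
      then obtain k where "k \<in> {k. enc p c k \<in> A} - {k. enc p c k \<notin> T}"
        by (meson ex_in_conv)
      then have "enc p c k \<in> A" "enc p c k \<in> T" by simp_all
      then show "\<exists>y. y \<in> A \<inter> range (enc p c) \<and> y \<in> T" by blast
    qed simp
    moreover have "countable (A \<inter> range (enc p c))" by simp
    ultimately show ?thesis by blast
  qed
qed

theorem theorem2p7:
  fixes X :: "'a topology" and p :: 'a
  assumes "p \<in> topspace X"
    and "productively_countably_tight_at TYPE(('a \<times> nat) set) X p"
  shows "S1_Omega_at X p"
proof -
  have ct: "countably_tight_at (prod_topology X (fan p)) (p, {})"
    using assms(2) ct_fan[of p] unfolding productively_countably_tight_at_def by auto
  have ctX: "\<exists>B\<subseteq>S. countable B \<and> p \<in> X closure_of B"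
    if S: "S \<subseteq> topspace X" "p \<in> X closure_of S" for S
  proof -
    have "{} \<in> fan p closure_of {{}}" by (rule closure_of_subset[THEN subsetD]) auto
    then have "(p,{}) \<in> prod_topology X (fan p) closure_of (S \<times> {{}})"
      using S(2) by (simp add: closure_of_Times)
    moreover have "S \<times> {{}} \<subseteq> topspace (prod_topology X (fan p))" using S(1) by auto
    ultimately obtain B where B: "B \<subseteq> S \<times> {{}}" "countable B"
        "(p,{}) \<in> prod_topology X (fan p) closure_of B"
      using ct unfolding countably_tight_at_def by blast
    have "B \<subseteq> fst ` B \<times> {{}}" using B(1) by force
    then have "(p,{}) \<in> prod_topology X (fan p) closure_of (fst ` B \<times> {{}})"
      using B(3) closure_of_mono by blast
    then have "p \<in> X closure_of fst ` B" by (simp add: closure_of_Times)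
    moreover have "fst ` B \<subseteq> S" using B(1) by auto
    ultimately show ?thesis using B(2) by blast
  qed
  show ?thesis unfolding S1_Omega_at_def
  proof (intro allI impI)
    fix A :: "nat \<Rightarrow> 'a set" assume "\<forall>n. A n \<in> Omega_at X p"
    then have AX: "\<And>n. A n \<subseteq> topspace X" and pA: "\<And>n. p \<notin> A n"
      and clA: "\<And>n. p \<in> X closure_of A n"
      by (auto simp: Omega_at_def)
    have Ane: "\<And>n. A n \<noteq> {}" using clA by (metis closure_of_empty empty_iff)
    have "\<forall>n. \<exists>B\<subseteq>A n. countable B \<and> p \<in> X closure_of B" using ctX AX clA by blast
    then obtain A' where A': "\<And>n. A' n \<subseteq> A n" "\<And>n. countable (A' n)" "\<And>n. p \<in> X closure_of A' n"
      by metis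
    define T where "T = (\<Union>n. A' n)"
    have cT: "countable T" using A'(2) unfolding T_def by auto
    have "A' 0 \<noteq> {}" using A'(3) by (metis closure_of_empty empty_iff)
    then have Tne: "T \<noteq> {}" unfolding T_def by auto
    define e where "e = from_nat_into T"
    have re: "range e = T" unfolding e_def using cT Tne by simp
    have key: "\<exists>i. e i \<in> U \<and> e i \<in> A n" if U: "openin X U" "p \<in> U" for n U
    proof -
      obtain y where y: "y \<in> A' n" "y \<in> U" using A'(3)[of n] U unfolding in_closure_of by blast
      then have "y \<in> range e" unfolding re T_def by blast
      then show ?thesis using y A'(1) by blast
    qed
    define v where "v c n = (if \<exists>i. c i \<and> e i \<in> A n then e (SOME i. c i \<and> e i \<in> A n)
       else (SOME x. x \<in> A n))" for c :: "nat \<Rightarrow> bool" and n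
    have vA: "v c n \<in> A n" for c n
    proof (cases "\<exists>i. c i \<and> e i \<in> A n")
      case True then show ?thesis unfolding v_def if_P[OF True] using someI_ex[OF True] by simp
    next
      case False then show ?thesis unfolding v_def if_not_P[OF False] using Ane[of n] by (simp add: some_in_eq)
    qed
    have vU: "v (\<lambda>i. e i \<in> U) n \<in> U" if U: "openin X U" "p \<in> U" for U n
    proof -
      have ex: "\<exists>i. e i \<in> U \<and> e i \<in> A n" using key U by blast
      then have "v (\<lambda>i. e i \<in> U) n = e (SOME i. e i \<in> U \<and> e i \<in> A n)" unfolding v_def by simp
      with someI_ex[OF ex] show ?thesis by simp
    qed
    define pos where "pos c k = to_nat (map c [0..<k])" for c :: "nat \<Rightarrow> bool" and k
    define E where "E = {(v c (pos c k), enc p c k) | c k. True}"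
    have clE: "(p, {}) \<in> prod_topology X (fan p) closure_of E"
      unfolding in_closure_of
    proof (intro conjI allI impI)
      show "(p, {}) \<in> topspace (prod_topology X (fan p))" using assms(1) by simp
      fix W assume W: "(p, {}) \<in> W \<and> openin (prod_topology X (fan p)) W"
      then obtain U V where UV: "openin X U" "openin (fan p) V" "p \<in> U" "{} \<in> V" "U \<times> V \<subseteq> W"
        unfolding openin_prod_topology_alt by meson
      define c where "c = (\<lambda>i. e i \<in> U)"
      have "finite {k. enc p c k \<notin> V}" using UV(2,4) by (simp add: openin_fan fanP_def)
      then obtain k where "k \<notin> {k. enc p c k \<notin> V}"
        using ex_new_if_finite[OF infinite_UNIV_nat] by blast
      then have "(v c (pos c k), enc p c k) \<in> U \<times> V" using vU[OF UV(1,3)] unfolding c_def by simp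
      moreover have "(v c (pos c k), enc p c k) \<in> E" unfolding E_def by blast
      ultimately show "\<exists>y. y \<in> E \<and> y \<in> W" using UV(5) by blast
    qed
    have Esub: "E \<subseteq> topspace (prod_topology X (fan p))" unfolding E_def using vA AX by auto
    obtain B where B: "B \<subseteq> E" "countable B" "(p,{}) \<in> prod_topology X (fan p) closure_of B"
      using ct Esub clE unfolding countably_tight_at_def by blast
    have claim: "\<exists>c. infinite {k. (v c (pos c k), enc p c k) \<in> B \<and> v c (pos c k) \<in> U}"
      if U: "openin X U" "p \<in> U" for U
    proof (rule ccontr)
      assume nc: "\<not> (\<exists>c. infinite {k. (v c (pos c k), enc p c k) \<in> B \<and> v c (pos c k) \<in> U})"
      define V where "V = UNIV - {enc p c k | c k. (v c (pos c k), enc p c k) \<in> B \<and> v c (pos c k) \<in> U}"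
      have e0: "{} \<in> V" unfolding V_def using enc_ne by fastforce
      moreover have "\<forall>c'. finite {k. enc p c' k \<notin> V}"
      proof
        fix c'
        have "{k. enc p c' k \<notin> V} \<subseteq> {k. (v c' (pos c' k), enc p c' k) \<in> B \<and> v c' (pos c' k) \<in> U}"
          unfolding V_def by (auto dest: enc_inj)
        moreover have "finite {k. (v c' (pos c' k), enc p c' k) \<in> B \<and> v c' (pos c' k) \<in> U}"
          using nc by blast
        ultimately show "finite {k. enc p c' k \<notin> V}" using finite_subset by blast
      qed
      ultimately have "openin (fan p) V" by (simp add: openin_fan fanP_def)
      then have "openin (prod_topology X (fan p)) (U \<times> V)" using U(1) by (simp add: openin_prod_Times_iff)
      moreover have "(p, {}) \<in> U \<times> V" using U(2) e0 by simp
      ultimately obtain z where z: "z \<in> B" "z \<in> U \<times> V"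
        using B(3) unfolding in_closure_of by meson
      then obtain c k where zc: "z = (v c (pos c k), enc p c k)" using B(1) unfolding E_def by blast
      then show False using z unfolding V_def by blast
    qed
    define K where "K = (\<lambda>z. (\<lambda>i. (p, 2*i) \<in> snd z)) ` B"
    have cK: "countable K" unfolding K_def using B(2) by simp
    have inK: "c \<in> K" if "(v c (pos c k), enc p c k) \<in> B" for c k
    proof -
      have "(\<lambda>i. (p, 2*i) \<in> snd (v c (pos c k), enc p c k)) \<in> K" unfolding K_def using that by (rule imageI)
      then show "c \<in> K" by (simp add: enc_dec)
    qed
    obtain c0 where "infinite {k. (v c0 (pos c0 k), enc p c0 k) \<in> B \<and> v c0 (pos c0 k) \<in> topspace X}"
      using claim[of "topspace X"] assms(1) by auto
    then obtain k0 where "(v c0 (pos c0 k0), enc p c0 k0) \<in> B" using not_finite_existsD by blast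
    then have Kne: "K \<noteq> {}" using inK by blast
    define ch where "ch = from_nat_into K"
    have rch: "range ch = K" unfolding ch_def using cK Kne by simp
    define g where "g n = (if \<exists>j k. pos (ch j) k = n then v (ch (LEAST j. \<exists>k. pos (ch j) k = n)) n
        else (SOME x. x \<in> A n))" for n
    have gA: "g n \<in> A n" for n unfolding g_def using vA Ane by (simp add: some_in_eq)
    have pos_eq: "k = k' \<and> map c [0..<k] = map c' [0..<k]" if "pos c k = pos c' k'" for c c' k k'
    proof -
      have m: "map c [0..<k] = map c' [0..<k']" using that unfolding pos_def by simp
      then have "length (map c [0..<k]) = length (map c' [0..<k'])" by simp
      then have "k = k'" by simp
      with m show ?thesis by simp
    qed
    have "range g \<in> Omega_at X p"
      unfolding Omega_at_def
    proof (intro CollectI conjI)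
      show "range g \<subseteq> topspace X" using gA AX by blast
      show "p \<notin> range g" using gA pA by (metis imageE)
      show "p \<in> X closure_of range g" unfolding in_closure_of
      proof (intro conjI allI impI)
        show "p \<in> topspace X" by (rule assms(1))
        fix U assume U: "p \<in> U \<and> openin X U"
        obtain c where inf: "infinite {k. (v c (pos c k), enc p c k) \<in> B \<and> v c (pos c k) \<in> U}"
          using claim U by blast
        then obtain k1 where "(v c (pos c k1), enc p c k1) \<in> B" using not_finite_existsD by blast
        then have "c \<in> K" by (rule inK)
        then obtain j where cj: "ch j = c" using rch by (metis rangeE)
        define F where "F = (\<Union>j'\<in>{j'. j' < j \<and> ch j' \<noteq> c}. {k. map (ch j') [0..<k] = map c [0..<k]})"
        have fF: "finite F" unfolding F_def
        proof (rule finite_UN_I)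
          show "finite {j'. j' < j \<and> ch j' \<noteq> c}" by simp
          fix j' assume "j' \<in> {j'. j' < j \<and> ch j' \<noteq> c}"
          then obtain d where d: "ch j' d \<noteq> c d" by (auto simp: fun_eq_iff)
          have "{k. map (ch j') [0..<k] = map c [0..<k]} \<subseteq> {..d}"
          proof
            fix k assume "k \<in> {k. map (ch j') [0..<k] = map c [0..<k]}"
            then have m: "map (ch j') [0..<k] = map c [0..<k]" by simp
            show "k \<in> {..d}"
            proof (rule ccontr)
              assume "k \<notin> {..d}" then have "d < k" by simp
              then have "map (ch j') [0..<k] ! d = ch j' d" "map c [0..<k] ! d = c d" by simp_all
              then show False using m d by simp
            qed
          qed
          then show "finite {k. map (ch j') [0..<k] = map c [0..<k]}" using finite_subset by blast
        qed
        obtain k where k: "k \<in> {k. (v c (pos c k), enc p c k) \<in> B \<and> v c (pos c k) \<in> U}" "k \<notin> F"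
        proof -
          have "infinite ({k. (v c (pos c k), enc p c k) \<in> B \<and> v c (pos c k) \<in> U} - F)"
            using Diff_infinite_finite[OF fF inf] .
          then have "{k. (v c (pos c k), enc p c k) \<in> B \<and> v c (pos c k) \<in> U} - F \<noteq> {}"
            by (rule infinite_imp_nonempty)
          then obtain k where kk: "k \<in> {k. (v c (pos c k), enc p c k) \<in> B \<and> v c (pos c k) \<in> U} - F"
            by (meson ex_in_conv)
          show ?thesis by (rule that[of k]) (use kk in simp_all)
        qed
        define n where "n = pos c k"
        have ex: "\<exists>j k. pos (ch j) k = n" using cj n_def by blast
        define j0 where "j0 = (LEAST j. \<exists>k. pos (ch j) k = n)"
        have j0ex: "\<exists>k. pos (ch j0) k = n" unfolding j0_def by (rule LeastI_ex[OF ex])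
        have j0le: "j0 \<le> j" unfolding j0_def by (rule Least_le) (use cj n_def in blast)
        obtain k' where k': "pos (ch j0) k' = pos c k" using j0ex n_def by blast
        have mm: "map (ch j0) [0..<k] = map c [0..<k]" using pos_eq[OF k'] by simp
        have "ch j0 = c"
        proof (rule ccontr)
          assume ne: "ch j0 \<noteq> c"
          then have "j0 \<noteq> j" using cj by blast
          then have "j0 < j" using j0le by simp
          then have "k \<in> F" unfolding F_def using ne mm by blast
          then show False using k(2) by simp
        qed
        moreover have "g n = v (ch j0) n" unfolding g_def j0_def using ex by simp
        ultimately have "g n = v c n" by simp
        then have "g n \<in> U" using k(1) n_def by simp
        then show "\<exists>y. y \<in> range g \<and> y \<in> U" by blast
      qed
    qed
    then show "\<exists>a. (\<forall>n. a n \<in> A n) \<and> range a \<in> Omega_at X p" using gA by blast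
  qed
qed

end
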